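(* Let $d\in\mathbb{N}$ and let $\mathcal{M},\mathcal{G}\subseteq\mathbb{N}_0^d$ be non-empty games. Then $\mathcal{M}^\infty=\mathcal{G}^\infty$ if and only if $\min(\mathcal{M})=\min(\mathcal{G})$.
   Context: For $d\in\mathbb{N}$ a game is a set $\mathcal{M}\subseteq\mathbb{N}_0^d$ of moves. From position $\boldsymbol x$ a player may move to $\boldsymbol y\in\mathbb{N}_0^d$ iff $\boldsymbol x-\boldsymbol y\in\mathcal{M}$. Misère play: a player who cannot move wins. If $\boldsymbol 0\in\mathcal{M}$, $P(\mathcal{M})=\varnothing$. Otherwise: a position is an N-position if it has no option or some option is a P-position; otherwise it is a P-position; $P(\mathcal{M})$ denotes the set of P-positions. The $\star$-operator is $\mathcal{M}^\star=P(\mathcal{M})$; $\mathcal{M}^0=\mathcal{M}$, $\mathcal{M}^i=(\mathcal{M}^{i-1})^\star$. $\mathcal{M}^\infty=\lim_i\mathcal{M}^i$ is the pointwise limit (the set of $\boldsymbol x$ lying in $\mathcal{M}^i$ for all sufficiently large $i$, where every $\boldsymbol x$ is eventually always in or eventually always out); it always exists. $\min(S)$ is the set of minimal elements of $S$ under the componentwise partial order. *)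

theory Defs
  imports Main
begin

text \<open>Positions in N_0^d are functions 'd \<Rightarrow> nat for a finite index type 'd
  (d = CARD('d) \<ge> 1). The order on functions is the componentwise order.\<close>

type_synonym 'd pos = "'d \<Rightarrow> nat"

text \<open>From x one may move to y iff x - y \<in> M (with y \<in> N_0^d), i.e. x = y + m for some m \<in> M.\<close>
definition options :: "'d pos set \<Rightarrow> 'd pos \<Rightarrow> 'd pos set" where
  "options M x = {y. \<exists>m\<in>M. \<forall>k. x k = y k + m k}"

text \<open>The set of P-positions (misere play): empty if 0 \<in> M; otherwise the unique set S
  with x \<in> S iff x has an option and no option of x lies in S (the recursive definition).\<close>
definition Ppos :: "'d pos set \<Rightarrow> 'd pos set" where
  "Ppos M = (if (\<lambda>_. 0) \<in> M then {}
     else (THE S. \<forall>x. x \<in> S \<longleftrightarrow> (options M x \<noteq> {} \<and> (\<forall>y\<in>options M x. y \<notin> S))))"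

definition star_iter :: "nat \<Rightarrow> 'd pos set \<Rightarrow> 'd pos set" where
  "star_iter i M = (Ppos ^^ i) M"

definition star_inf :: "'d pos set \<Rightarrow> 'd pos set" where
  "star_inf M = {x. \<exists>N. \<forall>i\<ge>N. x \<in> star_iter i M}"

definition minimal_elems :: "'d pos set \<Rightarrow> 'd pos set" where
  "minimal_elems S = {x\<in>S. \<forall>y\<in>S. y \<le> x \<longrightarrow> y = x}"

end

theory Submission
  imports Defs
begin

definition ssum :: "('d::finite \<Rightarrow> nat) \<Rightarrow> nat" where "ssum x = sum x UNIV"

lemma dec:
  fixes x m :: "'d::finite \<Rightarrow> nat"
  assumes "m \<le> x" "m \<noteq> (\<lambda>_. 0)"
  shows "ssum (\<lambda>k. x k - m k) < ssum x"
proof -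
  from assms(2) obtain k where k: "m k \<noteq> 0" by auto
  have "m k \<le> x k" using assms(1) by (simp add: le_fun_def)
  hence "x k - m k < x k" using k by simp
  hence "sum (\<lambda>k. x k - m k) UNIV < sum x UNIV"
    by (intro sum_strict_mono_ex1) auto
  thus ?thesis by (simp add: ssum_def)
qed

lemma less_ssum:
  fixes x y :: "'d::finite \<Rightarrow> nat"
  assumes "y \<le> x" "y \<noteq> x"
  shows "ssum y < ssum x"
proof -
  from assms(2) obtain k where "y k \<noteq> x k" by auto
  moreover have "y k \<le> x k" using assms(1) by (simp add: le_fun_def)
  ultimately have "y k < x k" by simp
  hence "sum y UNIV < sum x UNIV"
    using assms(1) by (intro sum_strict_mono_ex1) (auto simp: le_fun_def)
  thus ?thesis by (simp add: ssum_def)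
qed

function pP :: "('d::finite \<Rightarrow> nat) set \<Rightarrow> ('d \<Rightarrow> nat) \<Rightarrow> bool" where
 "pP M x = ((\<exists>m\<in>M. m \<le> x) \<and> (\<forall>m. if m \<in> M \<and> m \<le> x \<and> m \<noteq> (\<lambda>_. 0) then \<not> pP M (\<lambda>k. x k - m k) else True))"
  by auto
termination
proof (relation "measure (\<lambda>(M,x). ssum x)")
  show "wf (measure (\<lambda>(M,x). ssum x))" by simp
next
  fix M :: "('d::finite \<Rightarrow> nat) set" and x m
  assume h: "m \<in> M \<and> m \<le> x \<and> m \<noteq> (\<lambda>_. 0)"
  thus "((M, \<lambda>k. x k - m k), M, x) \<in> measure (\<lambda>(M, x). ssum x)"
    using dec[of m x] by simp
qed
declare pP.simps[simp del]

lemma opt_iff: "y \<in> options M x \<longleftrightarrow> (\<exists>m\<in>M. m \<le> x \<and> y = (\<lambda>k. x k - m k))"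
proof
  assume "y \<in> options M x"
  then obtain m where m: "m \<in> M" "\<forall>k. x k = y k + m k" by (auto simp: options_def)
  hence "m \<le> x" "y = (\<lambda>k. x k - m k)" by (auto simp: le_fun_def intro!: ext)
  thus "\<exists>m\<in>M. m \<le> x \<and> y = (\<lambda>k. x k - m k)" using m by blast
next
  assume "\<exists>m\<in>M. m \<le> x \<and> y = (\<lambda>k. x k - m k)"
  then obtain m where "m \<in> M" "m \<le> x" "y = (\<lambda>k. x k - m k)" by blast
  thus "y \<in> options M x" unfolding options_def le_fun_def
    by (auto intro!: bexI[of _ m])
qed

lemma pP_iff:
  assumes "(\<lambda>_. 0) \<notin> M"
  shows "pP M x \<longleftrightarrow> (\<exists>m\<in>M. m \<le> x) \<and> (\<forall>m\<in>M. m \<le> x \<longrightarrow> \<not> pP M (\<lambda>k. x k - m k))"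
  apply (subst pP.simps)
  using assms by (auto simp: if_bool_eq_conj)

lemma Ppos_eq:
  fixes M :: "('d::finite \<Rightarrow> nat) set"
  assumes z: "(\<lambda>_. 0) \<notin> M"
  shows "Ppos M = {x. pP M x}"
proof -
  have ne: "options M x \<noteq> {} \<longleftrightarrow> (\<exists>m\<in>M. m \<le> x)" for x
    using opt_iff[of _ M x] by blast
  have P: "\<forall>x. x \<in> {x. pP M x} \<longleftrightarrow> (options M x \<noteq> {} \<and> (\<forall>y\<in>options M x. y \<notin> {x. pP M x}))"
  proof
    fix x
    show "x \<in> {x. pP M x} \<longleftrightarrow> (options M x \<noteq> {} \<and> (\<forall>y\<in>options M x. y \<notin> {x. pP M x}))"
      using pP_iff[OF z, of x] ne[of x] opt_iff[of _ M x] by auto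
  qed
  have U: "S = {x. pP M x}" if hS: "\<forall>x. x \<in> S \<longleftrightarrow> (options M x \<noteq> {} \<and> (\<forall>y\<in>options M x. y \<notin> S))" for S
  proof -
    have "x \<in> S \<longleftrightarrow> pP M x" for x
    proof (induction x rule: measure_induct_rule[of ssum])
      case (less x)
      have IH: "\<forall>y\<in>options M x. y \<in> S \<longleftrightarrow> pP M y"
      proof
        fix y assume "y \<in> options M x"
        then obtain m where "m \<in> M" "m \<le> x" "y = (\<lambda>k. x k - m k)" using opt_iff by blast
        moreover have "m \<noteq> (\<lambda>_. 0)" using z \<open>m \<in> M\<close> by auto
        ultimately have "ssum y < ssum x" using dec by blast
        thus "y \<in> S \<longleftrightarrow> pP M y" using less by blast
      qed
      have "x \<in> S \<longleftrightarrow> (options M x \<noteq> {} \<and> (\<forall>y\<in>options M x. y \<notin> S))" using hS by blast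
      also have "\<dots> \<longleftrightarrow> (options M x \<noteq> {} \<and> (\<forall>y\<in>options M x. y \<notin> {x. pP M x}))"
        using IH by auto
      also have "\<dots> \<longleftrightarrow> pP M x" using P by blast
      finally show ?case .
    qed
    thus ?thesis by auto
  qed
  have "(THE S. \<forall>x. x \<in> S \<longleftrightarrow> (options M x \<noteq> {} \<and> (\<forall>y\<in>options M x. y \<notin> S))) = {x. pP M x}"
    apply (rule the_equality)
    using P apply blast
    using U apply blast
    done
  thus ?thesis using z by (simp add: Ppos_def)
qed

lemma Ppos_char:
  fixes M :: "('d::finite \<Rightarrow> nat) set"
  assumes z: "(\<lambda>_. 0) \<notin> M"
  shows "x \<in> Ppos M \<longleftrightarrow> (\<exists>m\<in>M. m \<le> x) \<and> (\<forall>m\<in>M. m \<le> x \<longrightarrow> (\<lambda>k. x k - m k) \<notin> Ppos M)"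
  using pP_iff[OF z, of x] Ppos_eq[OF z] by simp

lemma Ppos_zero: "(\<lambda>_. 0) \<in> M \<Longrightarrow> Ppos M = {}"
  by (simp add: Ppos_def)

lemma below_min:
  fixes s :: "'d::finite \<Rightarrow> nat"
  shows "s \<in> S \<Longrightarrow> \<exists>a\<in>minimal_elems S. a \<le> s"
proof (induction s rule: measure_induct_rule[of ssum])
  case (less s)
  show ?case
  proof (cases "s \<in> minimal_elems S")
    case True thus ?thesis by auto
  next
    case False
    then obtain y where y: "y \<in> S" "y \<le> s" "y \<noteq> s" using less.prems
      by (auto simp: minimal_elems_def)
    hence "ssum y < ssum s" using less_ssum by blast
    then obtain a where "a \<in> minimal_elems S" "a \<le> y" using less y by blast
    thus ?thesis using y order_trans by blast
  qed
qed

lemma up_min: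
  fixes x :: "'d::finite \<Rightarrow> nat"
  shows "(\<exists>s\<in>S. s \<le> x) \<longleftrightarrow> (\<exists>a\<in>minimal_elems S. a \<le> x)"
proof
  assume "\<exists>s\<in>S. s \<le> x"
  then obtain s where s: "s \<in> S" "s \<le> x" by blast
  then obtain a where "a \<in> minimal_elems S" "a \<le> s" using below_min by blast
  thus "\<exists>a\<in>minimal_elems S. a \<le> x" using s order_trans by blast
next
  assume "\<exists>a\<in>minimal_elems S. a \<le> x"
  thus "\<exists>s\<in>S. s \<le> x" by (auto simp: minimal_elems_def)
qed

lemma min_between:
  fixes M S :: "('d::finite \<Rightarrow> nat) set"
  assumes "minimal_elems M \<subseteq> S" "\<forall>x\<in>S. \<exists>a\<in>minimal_elems M. a \<le> x"
  shows "minimal_elems S = minimal_elems M"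
proof (intro set_eqI iffI)
  fix x assume x: "x \<in> minimal_elems S"
  have xS: "x \<in> S" and xm: "\<forall>y\<in>S. y \<le> x \<longrightarrow> y = x" using x by (simp_all add: minimal_elems_def)
  obtain a where a: "a \<in> minimal_elems M" "a \<le> x" using assms(2) xS by blast
  have "a \<in> S" using assms(1) a(1) by (rule subsetD)
  hence "a = x" using xm a(2) by blast
  thus "x \<in> minimal_elems M" using a(1) by (simp only:)
next
  fix x assume x: "x \<in> minimal_elems M"
  have xm: "\<forall>y\<in>M. y \<le> x \<longrightarrow> y = x" using x by (simp add: minimal_elems_def)
  have xS: "x \<in> S" using assms(1) x by (rule subsetD)
  have "y = x" if y1: "y \<in> S" and y2: "y \<le> x" for y
  proof -
    obtain a where a1: "a \<in> minimal_elems M" and a2: "a \<le> y" using assms(2) y1 by blast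
    have aM: "a \<in> M" using a1 by (simp add: minimal_elems_def)
    have ax: "a \<le> x" using a2 y2 by (rule order_trans)
    have "a = x" using xm aM ax by blast
    hence "x \<le> y" using a2 by (simp only:)
    with y2 show "y = x" by (rule antisym)
  qed
  thus "x \<in> minimal_elems S" using xS unfolding minimal_elems_def by blast
qed

lemma min_Ppos:
  fixes M :: "('d::finite \<Rightarrow> nat) set"
  assumes z: "(\<lambda>_. 0) \<notin> M"
  shows "(\<lambda>_. 0) \<notin> Ppos M \<and> minimal_elems (Ppos M) = minimal_elems M"
proof -
  have z0: "(\<lambda>_. 0) \<notin> Ppos M"
  proof
    assume "(\<lambda>_. 0) \<in> Ppos M"
    then obtain m where "m \<in> M" "m \<le> (\<lambda>_. 0)" using Ppos_char[OF z] by blast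
    hence "m = (\<lambda>_. 0)" by (auto simp: le_fun_def)
    thus False using z \<open>m \<in> M\<close> by simp
  qed
  have "minimal_elems M \<subseteq> Ppos M"
  proof
    fix a assume a: "a \<in> minimal_elems M"
    have "\<forall>m\<in>M. m \<le> a \<longrightarrow> (\<lambda>k. a k - m k) \<notin> Ppos M"
    proof (intro ballI impI)
      fix m assume "m \<in> M" "m \<le> a"
      hence "m = a" using a by (auto simp: minimal_elems_def)
      thus "(\<lambda>k. a k - m k) \<notin> Ppos M" using z0 by simp
    qed
    moreover have "\<exists>m\<in>M. m \<le> a" using a by (auto simp: minimal_elems_def)
    ultimately show "a \<in> Ppos M" using Ppos_char[OF z] by blast
  qed
  moreover have "\<forall>x\<in>Ppos M. \<exists>a\<in>minimal_elems M. a \<le> x"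
    using Ppos_char[OF z] up_min by blast
  ultimately show ?thesis using z0 min_between by blast
qed

lemma star_iter_Suc: "star_iter (Suc i) M = Ppos (star_iter i M)"
  by (simp add: star_iter_def)

lemma iter_min:
  fixes M :: "('d::finite \<Rightarrow> nat) set"
  assumes z: "(\<lambda>_. 0) \<notin> M"
  shows "(\<lambda>_. 0) \<notin> star_iter i M \<and> minimal_elems (star_iter i M) = minimal_elems M"
proof (induction i)
  case 0 thus ?case using z by (simp add: star_iter_def)
next
  case (Suc i) thus ?case using min_Ppos[of "star_iter i M"] by (simp add: star_iter_Suc)
qed

lemma iter_zero:
  fixes M :: "('d::finite \<Rightarrow> nat) set"
  assumes z: "(\<lambda>_. 0) \<in> M"
  shows "star_iter (Suc i) M = {}"
proof (induction i)
  case 0 thus ?case using z Ppos_zero by (simp add: star_iter_Suc star_iter_def)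
next
  case (Suc i)
  have "Ppos ({} :: ('d \<Rightarrow> nat) set) = {}" using Ppos_char[of "{}"] by auto
  thus ?case using Suc by (simp only: star_iter_Suc)
qed

lemma local_aux:
  fixes M G D :: "('d::finite \<Rightarrow> nat) set"
  assumes z: "(\<lambda>_. 0) \<notin> M"
    and down: "\<And>x y. x \<in> D \<Longrightarrow> y \<le> x \<Longrightarrow> y \<in> D"
    and agree: "M \<inter> D \<subseteq> G"
    and x: "\<forall>a\<in>minimal_elems M. a \<le> x \<longrightarrow> (\<lambda>k. x k - a k) \<in> D"
    and m: "m \<in> M" "m \<le> x" "(\<lambda>k. x k - m k) \<in> Ppos M"
  shows "m \<in> G"
proof -
  obtain m' where "m' \<in> M" "m' \<le> (\<lambda>k. x k - m k)" using m(3) Ppos_char[OF z] by blast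
  then obtain a where a: "a \<in> minimal_elems M" "a \<le> (\<lambda>k. x k - m k)" using up_min by blast
  have ax: "a \<le> x" using a(2) unfolding le_fun_def by (meson diff_le_self le_trans)
  have "m \<le> (\<lambda>k. x k - a k)"
  proof (rule le_funI)
    fix k
    have "a k \<le> x k - m k" "m k \<le> x k" using a(2) m(2) by (simp_all add: le_fun_def)
    thus "m k \<le> x k - a k" by arith
  qed
  hence "m \<in> D" using down x a(1) ax by blast
  thus ?thesis using agree m(1) by blast
qed

lemma local_step:
  fixes M G D :: "('d::finite \<Rightarrow> nat) set"
  assumes zM: "(\<lambda>_. 0) \<notin> M" and zG: "(\<lambda>_. 0) \<notin> G"
    and mins: "minimal_elems M = minimal_elems G"
    and down: "\<And>x y. x \<in> D \<Longrightarrow> y \<le> x \<Longrightarrow> y \<in> D"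
    and agree: "M \<inter> D = G \<inter> D"
  shows "\<forall>a\<in>minimal_elems M. a \<le> x \<longrightarrow> (\<lambda>k. x k - a k) \<in> D \<Longrightarrow> x \<in> Ppos M \<longleftrightarrow> x \<in> Ppos G"
proof (induction x rule: measure_induct_rule[of ssum])
  case (less x)
  have D'down: "\<forall>a\<in>minimal_elems M. a \<le> y \<longrightarrow> (\<lambda>k. y k - a k) \<in> D" if "y \<le> x" for y
  proof (intro ballI impI)
    fix a assume a: "a \<in> minimal_elems M" "a \<le> y"
    have "a \<le> x" using a(2) that by (rule order_trans)
    hence "(\<lambda>k. x k - a k) \<in> D" using less.prems a(1) by blast
    moreover have "(\<lambda>k. y k - a k) \<le> (\<lambda>k. x k - a k)" using that by (auto simp: le_fun_def diff_le_mono)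
    ultimately show "(\<lambda>k. y k - a k) \<in> D" using down by blast
  qed
  have sub: "(\<lambda>k. x k - m k) \<le> x" for m by (auto simp: le_fun_def)
  have A1: "\<forall>m\<in>M. m \<le> x \<longrightarrow> (\<lambda>k. x k - m k) \<in> Ppos M \<longrightarrow> m \<in> G \<and> (\<lambda>k. x k - m k) \<in> Ppos G"
  proof (intro ballI impI conjI)
    fix m assume m: "m \<in> M" "m \<le> x" "(\<lambda>k. x k - m k) \<in> Ppos M"
    have ag: "M \<inter> D \<subseteq> G" using agree by blast
    show "m \<in> G" using local_aux[OF zM down ag less.prems m] .
    have "m \<noteq> (\<lambda>_. 0)" using zM m by auto
    hence "ssum (\<lambda>k. x k - m k) < ssum x" using dec m by blast
    thus "(\<lambda>k. x k - m k) \<in> Ppos G" using less.IH D'down[OF sub] m(3) by blast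
  qed
  have A2: "\<forall>m\<in>G. m \<le> x \<longrightarrow> (\<lambda>k. x k - m k) \<in> Ppos G \<longrightarrow> m \<in> M \<and> (\<lambda>k. x k - m k) \<in> Ppos M"
  proof (intro ballI impI conjI)
    fix m assume m: "m \<in> G" "m \<le> x" "(\<lambda>k. x k - m k) \<in> Ppos G"
    have ag: "G \<inter> D \<subseteq> M" using agree by blast
    have pr: "\<forall>a\<in>minimal_elems G. a \<le> x \<longrightarrow> (\<lambda>k. x k - a k) \<in> D" using less.prems mins by simp
    show "m \<in> M" using local_aux[OF zG down ag pr m] .
    have "m \<noteq> (\<lambda>_. 0)" using zG m by auto
    hence "ssum (\<lambda>k. x k - m k) < ssum x" using dec m by blast
    thus "(\<lambda>k. x k - m k) \<in> Ppos M" using less.IH D'down[OF sub] m(3) by blast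
  qed
  have E: "(\<exists>m\<in>M. m \<le> x) \<longleftrightarrow> (\<exists>m\<in>G. m \<le> x)" using up_min[of M x] up_min[of G x] mins by simp
  show ?case using Ppos_char[OF zM, of x] Ppos_char[OF zG, of x] A1 A2 E by blast
qed

primrec dk :: "('d::finite \<Rightarrow> nat) set \<Rightarrow> nat \<Rightarrow> ('d \<Rightarrow> nat) set" where
  "dk A 0 = {}"
| "dk A (Suc k) = {x. \<forall>a\<in>A. a \<le> x \<longrightarrow> (\<lambda>i. x i - a i) \<in> dk A k}"

lemma dk_down: "x \<in> dk A k \<Longrightarrow> y \<le> x \<Longrightarrow> y \<in> dk A k"
proof (induction k arbitrary: x y)
  case 0 thus ?case by simp
next
  case (Suc k)
  show ?case
  proof (simp, intro ballI impI)
    fix a assume a: "a \<in> A" "a \<le> y"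
    have "a \<le> x" using a(2) Suc.prems(2) by (rule order_trans)
    hence "(\<lambda>i. x i - a i) \<in> dk A k" using Suc.prems(1) a(1) by simp
    moreover have "(\<lambda>i. y i - a i) \<le> (\<lambda>i. x i - a i)" using Suc.prems by (auto simp: le_fun_def diff_le_mono)
    ultimately show "(\<lambda>i. y i - a i) \<in> dk A k" using Suc.IH by blast
  qed
qed

lemma dk_cover: "(\<lambda>_. 0) \<notin> A \<Longrightarrow> ssum x < k \<Longrightarrow> x \<in> dk A k"
proof (induction k arbitrary: x)
  case 0 thus ?case by simp
next
  case (Suc k)
  show ?case
  proof (simp, intro ballI impI)
    fix a assume a: "a \<in> A" "a \<le> x"
    have "a \<noteq> (\<lambda>_. 0)" using a Suc.prems by auto
    hence "ssum (\<lambda>i. x i - a i) < k" using dec[OF a(2)] Suc.prems by simp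
    thus "(\<lambda>i. x i - a i) \<in> dk A k" using Suc by blast
  qed
qed

lemma agree_iter:
  fixes M G :: "('d::finite \<Rightarrow> nat) set"
  assumes zM: "(\<lambda>_. 0) \<notin> M" and zG: "(\<lambda>_. 0) \<notin> G"
    and mins: "minimal_elems M = minimal_elems G"
  shows "\<forall>i\<ge>k. star_iter i M \<inter> dk (minimal_elems M) k = star_iter i G \<inter> dk (minimal_elems M) k"
proof (induction k)
  case 0 thus ?case by simp
next
  case (Suc k)
  show ?case
  proof (intro allI impI)
    fix i assume "Suc k \<le> i"
    then obtain j where j: "i = Suc j" "k \<le> j" by (cases i) auto
    let ?A = "minimal_elems M"
    have a1: "(\<lambda>_. 0) \<notin> star_iter j M" "minimal_elems (star_iter j M) = ?A"
      using iter_min[OF zM] by auto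
    have a2: "(\<lambda>_. 0) \<notin> star_iter j G" "minimal_elems (star_iter j G) = ?A"
      using iter_min[OF zG] mins by auto
    have ag: "star_iter j M \<inter> dk ?A k = star_iter j G \<inter> dk ?A k" using Suc j by blast
    have "x \<in> Ppos (star_iter j M) \<longleftrightarrow> x \<in> Ppos (star_iter j G)" if "x \<in> dk ?A (Suc k)" for x
    proof -
      have m: "minimal_elems (star_iter j M) = minimal_elems (star_iter j G)" using a1(2) a2(2) by simp
      have dd: "\<And>x y. x \<in> dk ?A k \<Longrightarrow> y \<le> x \<Longrightarrow> y \<in> dk ?A k" by (rule dk_down)
      have pr: "\<forall>a\<in>minimal_elems (star_iter j M). a \<le> x \<longrightarrow> (\<lambda>k. x k - a k) \<in> dk ?A k"
        using that a1(2) by simp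
      show ?thesis by (rule local_step[OF a1(1) a2(1) m dd ag pr])
    qed
    thus "star_iter i M \<inter> dk ?A (Suc k) = star_iter i G \<inter> dk ?A (Suc k)"
      using j by (auto simp: star_iter_Suc)
  qed
qed

lemma min_zero:
  fixes M :: "('d::finite \<Rightarrow> nat) set"
  assumes "(\<lambda>_. 0) \<in> M" shows "minimal_elems M = {\<lambda>_. 0}"
  using assms by (auto simp: minimal_elems_def le_fun_def intro!: ext)

lemma inf_zero:
  fixes M :: "('d::finite \<Rightarrow> nat) set"
  assumes "(\<lambda>_. 0) \<in> M" shows "star_inf M = {}"
proof -
  have "x \<notin> star_inf M" for x
  proof
    assume "x \<in> star_inf M"
    then obtain N where "\<forall>i\<ge>N. x \<in> star_iter i M" by (auto simp: star_inf_def)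
    hence "x \<in> star_iter (Suc N) M" by simp
    thus False using iter_zero[OF assms] by simp
  qed
  thus ?thesis by auto
qed

lemma inf_min:
  fixes M :: "('d::finite \<Rightarrow> nat) set"
  assumes z: "(\<lambda>_. 0) \<notin> M" and ne: "M \<noteq> {}"
  shows "minimal_elems (star_inf M) = minimal_elems M" "minimal_elems M \<noteq> {}"
    "minimal_elems M \<subseteq> star_inf M"
proof -
  show s: "minimal_elems M \<subseteq> star_inf M"
  proof
    fix a assume a: "a \<in> minimal_elems M"
    have "a \<in> star_iter i M" for i using iter_min[OF z, of i] a by (auto simp: minimal_elems_def)
    thus "a \<in> star_inf M" by (auto simp: star_inf_def)
  qed
  have "\<forall>x\<in>star_inf M. \<exists>a\<in>minimal_elems M. a \<le> x"
  proof
    fix x assume "x \<in> star_inf M"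
    then obtain N where "\<forall>i\<ge>N. x \<in> star_iter i M" by (auto simp: star_inf_def)
    hence "x \<in> star_iter N M" by simp
    then obtain a where "a \<in> minimal_elems (star_iter N M)" "a \<le> x" using below_min by blast
    thus "\<exists>a\<in>minimal_elems M. a \<le> x" using iter_min[OF z, of N] by auto
  qed
  thus "minimal_elems (star_inf M) = minimal_elems M" using s min_between by blast
  from ne obtain m where "m \<in> M" by auto
  thus "minimal_elems M \<noteq> {}" using below_min by blast
qed

theorem theorem5:
  fixes M G :: "('d::finite \<Rightarrow> nat) set"
  assumes "M \<noteq> {}" and "G \<noteq> {}"
  shows "star_inf M = star_inf G \<longleftrightarrow> minimal_elems M = minimal_elems G"
proof (cases "(\<lambda>_. 0) \<in> M"; cases "(\<lambda>_. 0) \<in> G")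
  assume "(\<lambda>_. 0) \<in> M" "(\<lambda>_. 0) \<in> G"
  thus ?thesis using inf_zero min_zero by metis
next
  assume a: "(\<lambda>_. 0) \<in> M" "(\<lambda>_. 0) \<notin> G"
  have "star_inf G \<noteq> {}" using inf_min[OF a(2) assms(2)] by blast
  moreover have "minimal_elems G \<noteq> {\<lambda>_. 0}" using a(2) by (auto simp: minimal_elems_def)
  ultimately show ?thesis using inf_zero[OF a(1)] min_zero[OF a(1)] by metis
next
  assume a: "(\<lambda>_. 0) \<notin> M" "(\<lambda>_. 0) \<in> G"
  have "star_inf M \<noteq> {}" using inf_min[OF a(1) assms(1)] by blast
  moreover have "minimal_elems M \<noteq> {\<lambda>_. 0}" using a(1) by (auto simp: minimal_elems_def)
  ultimately show ?thesis using inf_zero[OF a(2)] min_zero[OF a(2)] by metis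
next
  assume zM: "(\<lambda>_. 0) \<notin> M" and zG: "(\<lambda>_. 0) \<notin> G"
  show ?thesis
  proof
    assume "star_inf M = star_inf G"
    thus "minimal_elems M = minimal_elems G"
      using inf_min(1)[OF zM assms(1)] inf_min(1)[OF zG assms(2)] by metis
  next
    assume mins: "minimal_elems M = minimal_elems G"
    let ?A = "minimal_elems M"
    have zA: "(\<lambda>_. 0) \<notin> ?A" using zM by (auto simp: minimal_elems_def)
    have key: "x \<in> star_inf M \<longleftrightarrow> x \<in> star_inf G" for x
    proof -
      define k where "k = Suc (ssum x)"
      have xd: "x \<in> dk ?A k" unfolding k_def by (rule dk_cover[OF zA]) simp
      have ag: "\<forall>i\<ge>k. x \<in> star_iter i M \<longleftrightarrow> x \<in> star_iter i G"
        using agree_iter[OF zM zG mins, of k] xd by blast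
      show ?thesis
      proof
        assume "x \<in> star_inf M"
        then obtain N where N: "\<forall>i\<ge>N. x \<in> star_iter i M" by (auto simp: star_inf_def)
        have "\<forall>i\<ge>max N k. x \<in> star_iter i G" using N ag by auto
        thus "x \<in> star_inf G" unfolding star_inf_def by blast
      next
        assume "x \<in> star_inf G"
        then obtain N where N: "\<forall>i\<ge>N. x \<in> star_iter i G" by (auto simp: star_inf_def)
        have "\<forall>i\<ge>max N k. x \<in> star_iter i M" using N ag by auto
        thus "x \<in> star_inf M" unfolding star_inf_def by blast
      qed
    qed
    thus "star_inf M = star_inf G" by auto
  qed
qed

end
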